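(* For every integer $k>1$, the automorphism group $\mathrm{Aut}(\mathcal F_k)$ of the graph $\mathcal F_k$ is uncountable.
   Context: The vertex set $V$ consists of all reduced fractions $p/q$ with $p,q\in\mathbb Z$, $\gcd(p,q)=1$, together with $1/0$; here $p/q$ and $(-p)/(-q)$ denote the same vertex. For vertices define $d(p/q,a/b)=|pb-qa|$. The graph $\mathcal F_k$ has vertex set $V$, with an edge between $p/q$ and $a/b$ exactly when $d(p/q,a/b)=k$. $\mathrm{Aut}$ denotes the group of graph automorphisms. *)

theory Defs
  imports Main "HOL-Library.FuncSet" "HOL-Library.Countable_Set"
begin

text \<open>Vertices: reduced fractions p/q with gcd(p,q)=1, identified up to sign (p,q) ~ (-p,-q).
  We use the canonical representative with q > 0, or (p,q) = (1,0) for 1/0.\<close>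
definition farey_vertices :: "(int \<times> int) set" where
  "farey_vertices = {(p, q). coprime p q \<and> (q > 0 \<or> (q = 0 \<and> p = 1))}"

definition farey_dist :: "int \<times> int \<Rightarrow> int \<times> int \<Rightarrow> int" where
  "farey_dist v w = \<bar>fst v * snd w - snd v * fst w\<bar>"

definition farey_adj :: "int \<Rightarrow> int \<times> int \<Rightarrow> int \<times> int \<Rightarrow> bool" where
  "farey_adj k v w \<longleftrightarrow> v \<in> farey_vertices \<and> w \<in> farey_vertices \<and> farey_dist v w = k"

text \<open>Graph automorphisms of F_k: bijections of the vertex set preserving and reflecting
  adjacency; represented as extensional functions so that distinct automorphisms are
  distinct maps on vertices.\<close>
definition farey_aut :: "int \<Rightarrow> (int \<times> int \<Rightarrow> int \<times> int) set" where
  "farey_aut k = {f. f \<in> extensional farey_vertices \<and> bij_betw f farey_vertices farey_vertices \<and>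
     (\<forall>v\<in>farey_vertices. \<forall>w\<in>farey_vertices. farey_adj k v w \<longleftrightarrow> farey_adj k (f v) (f w))}"

end

theory Submission
  imports Defs
begin

lemma uncountable_nat_sets: "uncountable (UNIV :: nat set set)"
proof
  assume "countable (UNIV :: nat set set)"
  then obtain f :: "nat \<Rightarrow> nat set" where "range f = UNIV"
    by (metis UNIV_not_empty uncountable_def)
  then obtain n where "f n = {m. m \<notin> f m}" by (metis UNIV_I imageE)
  then show False by blast
qed

definition EE :: "nat set \<Rightarrow> int \<Rightarrow> int" where
  "EE X n = (if n div 2 \<in> int ` X then (if even n then 1 else -1) else 0)"

definition ee :: "int \<Rightarrow> nat set \<Rightarrow> int \<times> int \<Rightarrow> int" where
  "ee k X v = (if snd v > 0 \<and> k dvd snd v then EE X (fst v div snd v) else 0)"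

definition sh :: "int \<Rightarrow> nat set \<Rightarrow> int \<times> int \<Rightarrow> int \<times> int" where
  "sh k X v = (fst v + ee k X v * snd v, snd v)"

definition ff :: "int \<Rightarrow> nat set \<Rightarrow> int \<times> int \<Rightarrow> int \<times> int" where
  "ff k X v = (if v \<in> farey_vertices then sh k X v else undefined)"

lemma EE_vals: "EE X n = 0 \<or> EE X n = 1 \<or> EE X n = -1"
  by (auto simp: EE_def)

lemma EE_inv: "EE X (n + EE X n) = - EE X n"
proof -
  have a: "(n + 1) div 2 = n div 2" if "even n" using that by auto
  have b: "(n - 1) div 2 = n div 2" if "odd n" using that
    by (auto elim!: oddE)
  show ?thesis using a b by (auto simp: EE_def)
qed

lemma div_shift: "(q::int) > 0 \<Longrightarrow> (p + e * q) div q = p div q + e"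
  by simp

lemma ee_sh: "ee k X (sh k X v) = - ee k X v"
  using EE_inv[of X "fst v div snd v"]
  by (auto simp: ee_def sh_def add.commute)

lemma sh_sh: "sh k X (sh k X v) = v"
  using ee_sh[of k X v] by (cases v) (auto simp: sh_def algebra_simps)

lemma sh_V: "v \<in> farey_vertices \<Longrightarrow> sh k X v \<in> farey_vertices"
proof -
  assume v: "v \<in> farey_vertices"
  obtain p q where pq: "v = (p, q)" by (cases v)
  have c: "coprime p q" and d: "q > 0 \<or> (q = 0 \<and> p = 1)" using v pq by (auto simp: farey_vertices_def)
  have "gcd (p + ee k X v * q) q = gcd p q"
    by (metis gcd.commute gcd_add_mult mult.commute add.commute)
  then have "coprime (p + ee k X v * q) q" using c by (simp add: coprime_iff_gcd_eq_1)
  moreover have "q = 0 \<Longrightarrow> ee k X v = 0" using pq by (simp add: ee_def)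
  ultimately show ?thesis using d pq by (auto simp: sh_def farey_vertices_def)
qed

lemma strip_lemma:
  fixes p q a b k :: int
  assumes k: "k > 1" and q: "q > 0" "k dvd q" and b: "b > 0" "k dvd b"
    and cab: "coprime a b" and nm: "p div q < a div b"
  shows "q * a - p * b > k"
proof -
  define n where "n = p div q"
  define m where "m = a div b"
  have "p - q * n < q" using q unfolding n_def
    by (metis minus_div_mult_eq_mod mult.commute pos_mod_bound)
  then have p1: "p < (n + 1) * q" by (simp add: algebra_simps)
  have nm1: "n + 1 \<le> m" using nm unfolding n_def m_def by simp
  have "(n + 1) * q \<le> m * q" using nm1 q by (simp add: mult_right_mono)
  with p1 have p2: "p + 1 \<le> m * q" by simp
  have a0: "a - b * m \<ge> 0" using b unfolding m_def
    by (metis minus_div_mult_eq_mod mult.commute pos_mod_sign)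
  have "a \<noteq> b * m"
  proof
    assume "a = b * m"
    then have "b dvd a" by simp
    then have "b dvd gcd a b" by simp
    then have "b dvd 1" using cab by (simp add: coprime_iff_gcd_eq_1)
    then have "b \<le> 1" using zdvd_imp_le by simp
    then show False using b k zdvd_imp_le[of k b] by simp
  qed
  then have a1: "a \<ge> b * m + 1" using a0 by simp
  have "q * a \<ge> q * (b * m + 1)" using a1 q by (simp add: mult_left_mono)
  moreover have "p * b + b \<le> m * q * b" using p2 b proof -
    have "(p + 1) * b \<le> (m * q) * b" using p2 b by (simp add: mult_right_mono)
    then show ?thesis by (simp add: algebra_simps)
  qed
  ultimately have "q * a - p * b \<ge> q + b" by (simp add: algebra_simps)
  moreover have "q \<ge> k" "b \<ge> k" using q b by (auto simp: zdvd_imp_le)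
  ultimately show ?thesis using k by simp
qed

lemma class_lemma:
  fixes p q a b k :: int
  assumes k: "k > 1" and c: "coprime p q" and q: "k dvd q" and nb: "\<not> k dvd b"
  shows "\<bar>p * b - q * a\<bar> \<noteq> k"
proof
  assume h: "\<bar>p * b - q * a\<bar> = k"
  then have "k dvd p * b - q * a" by (metis dvd_abs_iff dvd_refl)
  moreover have "k dvd q * a" using q by simp
  ultimately have "k dvd p * b" by (metis dvd_add_left_iff diff_add_cancel)
  moreover have "coprime k p" using c q
    by (metis coprime_commute coprime_mult_left_iff dvd_def)
  ultimately have "k dvd b" by (simp add: coprime_dvd_mult_right_iff)
  with nb show False by simp
qed

lemma key_lemma:
  assumes k: "k > 1" and v: "v \<in> farey_vertices" and w: "w \<in> farey_vertices"
    and e: "ee k X v \<noteq> ee k X w" and sv: "snd v \<noteq> 0" and sw: "snd w \<noteq> 0"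
  shows "farey_dist v w \<noteq> k"
proof -
  obtain p q where pq: "v = (p, q)" by (cases v)
  obtain a b where ab: "w = (a, b)" by (cases w)
  have q0: "q > 0" and cpq: "coprime p q" using v sv pq by (auto simp: farey_vertices_def)
  have b0: "b > 0" and cab: "coprime a b" using w sw ab by (auto simp: farey_vertices_def)
  have dist: "farey_dist v w = \<bar>p * b - q * a\<bar>" using pq ab by (simp add: farey_dist_def)
  show ?thesis
  proof (cases "k dvd q")
    case kq: True
    show ?thesis
    proof (cases "k dvd b")
      case kb: True
      have "p div q \<noteq> a div b" using e kq kb q0 b0 pq ab by (auto simp: ee_def)
      then consider "p div q < a div b" | "a div b < p div q" by linarith
      then show ?thesis
      proof cases
        case 1
        from strip_lemma[OF k q0 kq b0 kb cab 1] show ?thesis using dist by simp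
      next
        case 2
        from strip_lemma[OF k b0 kb q0 kq cpq 2] show ?thesis using dist by (simp add: algebra_simps)
      qed
    next
      case False
      from class_lemma[OF k cpq kq False] dist show ?thesis by simp
    qed
  next
    case nq: False
    then have "k dvd b" using e pq ab by (auto simp: ee_def split: if_splits)
    from class_lemma[OF k cab this nq, of p] dist show ?thesis by (simp add: abs_minus_commute mult.commute)
  qed
qed

lemma adj_pres:
  assumes k: "k > 1" and v: "v \<in> farey_vertices" and w: "w \<in> farey_vertices"
  shows "farey_dist v w = k \<longleftrightarrow> farey_dist (sh k X v) (sh k X w) = k"
proof -
  obtain p q where pq: "v = (p, q)" by (cases v)
  obtain a b where ab: "w = (a, b)" by (cases w)
  define e where "e = ee k X v"
  define e' where "e' = ee k X w"
  have d1: "farey_dist (sh k X v) (sh k X w) = \<bar>(p * b - q * a) + (e - e') * q * b\<bar>"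
    using pq ab by (simp add: farey_dist_def sh_def e_def e'_def algebra_simps)
  have d0: "farey_dist v w = \<bar>p * b - q * a\<bar>" using pq ab by (simp add: farey_dist_def)
  show ?thesis
  proof (cases "e = e' \<or> q = 0 \<or> b = 0")
    case True
    then show ?thesis using d0 d1 by auto
  next
    case False
    then have ne: "e \<noteq> e'" and q: "snd v \<noteq> 0" and b: "snd w \<noteq> 0" using pq ab by auto
    have A: "farey_dist v w \<noteq> k" using key_lemma[OF k v w _ q b] ne e_def e'_def by simp
    have B: "farey_dist (sh k X v) (sh k X w) \<noteq> k"
    proof (rule key_lemma[OF k sh_V[OF v] sh_V[OF w]])
      show "ee k X (sh k X v) \<noteq> ee k X (sh k X w)" using ne by (simp add: ee_sh e_def e'_def)
    qed (use q b in \<open>auto simp: sh_def\<close>)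
    show ?thesis using A B by simp
  qed
qed

lemma ff_aut: assumes k: "k > 1" shows "ff k X \<in> farey_aut k"
proof -
  have ext: "ff k X \<in> extensional farey_vertices" by (simp add: ff_def extensional_def)
  have bij: "bij_betw (ff k X) farey_vertices farey_vertices"
  proof (rule bij_betw_byWitness[where f' = "ff k X"])
    show "\<forall>a\<in>farey_vertices. ff k X (ff k X a) = a" by (simp add: ff_def sh_V sh_sh)
    show "\<forall>a\<in>farey_vertices. ff k X (ff k X a) = a" by (simp add: ff_def sh_V sh_sh)
    show "ff k X ` farey_vertices \<subseteq> farey_vertices" by (auto simp: ff_def sh_V)
    show "ff k X ` farey_vertices \<subseteq> farey_vertices" by (auto simp: ff_def sh_V)
  qed
  have adj: "\<forall>v\<in>farey_vertices. \<forall>w\<in>farey_vertices. farey_adj k v w \<longleftrightarrow> farey_adj k (ff k X v) (ff k X w)"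
    using adj_pres[OF k] by (simp add: farey_adj_def ff_def sh_V)
  show ?thesis using ext bij adj by (simp add: farey_aut_def)
qed

lemma ff_inj: assumes k: "k > 1" and j: "j \<in> X" "j \<notin> Y" shows "ff k X \<noteq> ff k Y"
proof
  assume h: "ff k X = ff k Y"
  define v where "v = (1 + (2 * int j) * k, k)"
  have "gcd (1 + (2 * int j) * k) k = gcd 1 k"
    by (metis gcd.commute gcd_add_mult mult.commute add.commute)
  then have vV: "v \<in> farey_vertices" using k by (simp add: v_def farey_vertices_def coprime_iff_gcd_eq_1)
  have dv: "(1 + (2 * int j) * k) div k = 2 * int j" using k by simp
  have "ee k X v = 1" "ee k Y v = 0" using k j dv by (auto simp: ee_def v_def EE_def)
  then have "ff k X v \<noteq> ff k Y v" using vV k by (simp add: ff_def sh_def v_def)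
  with h show False by simp
qed

theorem corollary1p2:
  fixes k :: int
  assumes "k > 1"
  shows "uncountable (farey_aut k)"
proof
  assume c: "countable (farey_aut k)"
  have "ff k ` UNIV \<subseteq> farey_aut k" using ff_aut[OF assms] by auto
  then have "countable (ff k ` UNIV)" using c by (rule countable_subset)
  moreover have "inj_on (ff k) UNIV"
  proof (rule inj_onI)
    fix X Y assume "ff k X = ff k Y"
    then show "X = Y" using ff_inj[OF assms, of _ X Y] ff_inj[OF assms, of _ Y X] by auto
  qed
  ultimately have "countable (UNIV :: nat set set)" using countable_image_inj_on by blast
  with uncountable_nat_sets show False by simp
qed

end
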